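(* Under the setting below, for every $k\in\mathbb{N}_0$: $Z_k(0)<0$ and $\lim_{\tau\to\tau^{*-}}Z_k(\tau)=-\infty$. Consequently, if $Z_k$ has finitely many zeros in $[0,\tau^* )$ and changes sign at each of them, then the number of zeros is even. Moreover, $Z_{k+1}(\tau)<Z_k(\tau)$ for all $\tau\in[0,\tau^* )$, and if $Z_k$ has no root in $[0,\tau^* )$ then $Z_j$ has no root in $[0,\tau^* )$ for every $j>k$.
   Context: Let $\delta>0$ and $\beta:[0,+\infty)\to(0,+\infty)$ continuously differentiable, strictly decreasing, with $\beta'(s)<0$ for $s>0$, $\lim_{S\to+\infty}\beta(S)=0$, and $\delta<\beta(0)$. Let $\bar\tau:=\frac1\delta\ln\!\big(\frac{2\beta(0)}{\delta+\beta(0)}\big)$, $\beta^{-1}$ the inverse of $\beta$ on $(0,\beta(0)]$, and for $\tau\in[0,\bar\tau)$: $S^*(\tau)=\beta^{-1}\!\big(\frac{\delta}{2e^{-\delta\tau}-1}\big)$, $N^*(\tau)=(2e^{-\delta\tau}-1)e^{\delta\tau}S^*(\tau)$, $A(\tau)=\delta+\beta(S^*(\tau))$, $B(\tau)=[2\beta(S^*(\tau))+N^*(\tau)\beta'(S^*(\tau))]e^{-\delta\tau}$. Let $\chi(y)=y\beta'(y)$ and assume (H$_1$) $\chi$ is decreasing on $[0,\beta^{-1}(\delta)]$ and (H$_2$) $\chi(\beta^{-1}(\delta))<-4\delta$. Then there is a unique $\tau^*\in(0,\bar\tau)$ such that $A(\tau)<|B(\tau)|$ (with $B(\tau)<0$)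 exactly for $\tau\in[0,\tau^* )$. For $k\in\mathbb{N}_0$ (nonnegative integers) and $\tau\in[0,\tau^* )$ define $\tau_k(\tau)=\dfrac{\arccos(A(\tau)/B(\tau))+2k\pi}{\sqrt{B(\tau)^2-A(\tau)^2}}$ and $Z_k(\tau)=\tau-\tau_k(\tau)$, with $\arccos$ valued in $[0,\pi]$. *)

theory Defs
  imports "HOL-Analysis.Analysis"
begin

definition taubar :: "(real \<Rightarrow> real) \<Rightarrow> real \<Rightarrow> real" where
  "taubar \<beta> \<delta> = (1/\<delta>) * ln (2 * \<beta> 0 / (\<delta> + \<beta> 0))"

definition betainv :: "(real \<Rightarrow> real) \<Rightarrow> real \<Rightarrow> real" where
  "betainv \<beta> y = the_inv_into {0..} \<beta> y"

definition Sstar :: "(real \<Rightarrow> real) \<Rightarrow> real \<Rightarrow> real \<Rightarrow> real" where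
  "Sstar \<beta> \<delta> \<tau> = betainv \<beta> (\<delta> / (2 * exp (-\<delta>*\<tau>) - 1))"

definition Nstar :: "(real \<Rightarrow> real) \<Rightarrow> real \<Rightarrow> real \<Rightarrow> real" where
  "Nstar \<beta> \<delta> \<tau> = (2 * exp (-\<delta>*\<tau>) - 1) * exp (\<delta>*\<tau>) * Sstar \<beta> \<delta> \<tau>"

definition Acoef :: "(real \<Rightarrow> real) \<Rightarrow> real \<Rightarrow> real \<Rightarrow> real" where
  "Acoef \<beta> \<delta> \<tau> = \<delta> + \<beta> (Sstar \<beta> \<delta> \<tau>)"

definition Bcoef :: "(real \<Rightarrow> real) \<Rightarrow> (real \<Rightarrow> real) \<Rightarrow> real \<Rightarrow> real \<Rightarrow> real" where
  "Bcoef \<beta> \<beta>' \<delta> \<tau> =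
     (2 * \<beta> (Sstar \<beta> \<delta> \<tau>) + Nstar \<beta> \<delta> \<tau> * \<beta>' (Sstar \<beta> \<delta> \<tau>)) * exp (-\<delta>*\<tau>)"

definition tauk :: "(real \<Rightarrow> real) \<Rightarrow> (real \<Rightarrow> real) \<Rightarrow> real \<Rightarrow> nat \<Rightarrow> real \<Rightarrow> real" where
  "tauk \<beta> \<beta>' \<delta> k \<tau> =
     (arccos (Acoef \<beta> \<delta> \<tau> / Bcoef \<beta> \<beta>' \<delta> \<tau>) + 2 * real k * pi)
       / sqrt ((Bcoef \<beta> \<beta>' \<delta> \<tau>)\<^sup>2 - (Acoef \<beta> \<delta> \<tau>)\<^sup>2)"

definition Zk :: "(real \<Rightarrow> real) \<Rightarrow> (real \<Rightarrow> real) \<Rightarrow> real \<Rightarrow> nat \<Rightarrow> real \<Rightarrow> real" where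
  "Zk \<beta> \<beta>' \<delta> k \<tau> = \<tau> - tauk \<beta> \<beta>' \<delta> k \<tau>"

definition changes_sign_at :: "(real \<Rightarrow> real) \<Rightarrow> real \<Rightarrow> bool" where
  "changes_sign_at f z \<longleftrightarrow> (\<exists>e>0.
     ((\<forall>t\<in>{z-e<..<z}. f t < 0) \<and> (\<forall>t\<in>{z<..<z+e}. f t > 0)) \<or>
     ((\<forall>t\<in>{z-e<..<z}. f t > 0) \<and> (\<forall>t\<in>{z<..<z+e}. f t < 0)))"

end

theory Submission
  imports Defs
begin

lemma nosign:
  fixes f :: "real \<Rightarrow> real"
  assumes cont: "continuous_on {0..<T} f" and ab: "0 \<le> a" "a \<le> b" "b < T"
    and nz: "\<forall>t\<in>{a..b}. f t \<noteq> 0"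
  shows "f a < 0 \<longleftrightarrow> f b < 0"
proof -
  have c: "continuous_on {a..b} f" using cont by (rule continuous_on_subset) (use ab in auto)
  have "False" if "f a < 0" "\<not> f b < 0"
  proof -
    have "f a \<le> 0" "0 \<le> f b" using that by auto
    from IVT'[of f a 0 b, OF this ab(2) c] nz show False by auto
  qed
  moreover have "False" if "\<not> f a < 0" "f b < 0"
  proof -
    have "f b \<le> 0" "0 \<le> f a" using that by auto
    from IVT2'[of f b 0 a, OF this ab(2) c] nz show False by auto
  qed
  ultimately show ?thesis by blast
qed

lemma parity:
  fixes f :: "real \<Rightarrow> real" and T :: real
  assumes cont: "continuous_on {0..<T} f" and f0: "f 0 < 0" and T: "0 < T"
    and ev: "eventually (\<lambda>t. f t < 0) (at_left T)"
    and fin: "finite {t\<in>{0..<T}. f t = 0}"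
    and sc: "\<forall>z\<in>{t\<in>{0..<T}. f t = 0}. changes_sign_at f z"
  shows "even (card {t\<in>{0..<T}. f t = 0})"
proof -
  define Zs where "Zs = {t\<in>{0..<T}. f t = 0}"
  have finZ: "finite Zs" using fin Zs_def by simp
  have key: "\<forall>a\<in>{0..<T}. f a \<noteq> 0 \<longrightarrow> card {z\<in>Zs. z<a} = n \<longrightarrow> (f a < 0 \<longleftrightarrow> even n)" for n
  proof (induction n)
    case 0
    show ?case
    proof (intro ballI impI)
      fix a assume a: "a \<in> {0..<T}" "f a \<noteq> 0" "card {z\<in>Zs. z<a} = 0"
      have "{z\<in>Zs. z<a} = {}" using a(3) finZ by simp
      hence "\<forall>t\<in>{0..a}. f t \<noteq> 0" using a unfolding Zs_def by fastforce
      with nosign[OF cont, of 0 a] a f0 show "f a < 0 \<longleftrightarrow> even (0::nat)" by auto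
    qed
  next
    case (Suc n)
    show ?case
    proof (intro ballI impI)
      fix a assume a: "a \<in> {0..<T}" "f a \<noteq> 0" "card {z\<in>Zs. z<a} = Suc n"
      define Q where "Q = {z\<in>Zs. z<a}"
      have finQ: "finite Q" using finZ Q_def by simp
      have Qne: "Q \<noteq> {}" using a(3) Q_def by (metis card.empty nat.simps(3))
      define z where "z = Max Q"
      have zQ: "z \<in> Q" using finQ Qne z_def by simp
      have zmax: "\<forall>w\<in>Q. w \<le> z" using finQ z_def by simp
      have za: "z < a" and zZ: "z \<in> Zs" using zQ Q_def by auto
      have z0: "0 < z" using zZ f0 unfolding Zs_def by (cases "z = 0") auto
      have zT: "z < T" using zZ Zs_def by auto
      from sc zZ obtain e where e: "e > 0" and
        sg: "((\<forall>t\<in>{z-e<..<z}. f t < 0) \<and> (\<forall>t\<in>{z<..<z+e}. f t > 0)) \<or>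
             ((\<forall>t\<in>{z-e<..<z}. f t > 0) \<and> (\<forall>t\<in>{z<..<z+e}. f t < 0))"
        unfolding Zs_def changes_sign_at_def by blast
      define W where "W = {w\<in>Zs. w<z}"
      have finW: "finite W" using finZ W_def by simp
      define lo where "lo = Max ({0, z-e} \<union> W)"
      have lo_ge: "\<forall>w\<in>{0, z-e} \<union> W. w \<le> lo" unfolding lo_def using finW by (intro ballI Max_ge) auto
      have "lo \<in> {0, z-e} \<union> W" unfolding lo_def by (rule Max_in) (use finW in auto)
      hence loz: "lo < z" using z0 e W_def by auto
      define b where "b = (lo + z)/2"
      have b: "z - e < b" "b < z" "0 \<le> b" "\<forall>w\<in>W. w < b" using lo_ge loz b_def by force+
      have Qeq: "Q = insert z W" using zmax Q_def W_def za zQ by auto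
      have cardW: "card W = n" using a(3) Qeq finW W_def Q_def by (simp add: W_def)
      have Wb: "{w\<in>Zs. w<b} = W" using b W_def by auto
      have bm: "b \<in> {z-e<..<z}" using b by auto
      have fb: "f b \<noteq> 0" using sg bm by force
      have IHb: "f b < 0 \<longleftrightarrow> even n" using Suc.IH[rule_format, of b] b zT fb Wb cardW by auto
      define c where "c = (z + min (z+e) a)/2"
      have c: "z < c" "c < z + e" "c < a" using za e c_def by auto
      have cm: "c \<in> {z<..<z+e}" using c by auto
      have fc: "f c < 0 \<longleftrightarrow> \<not> f b < 0" using sg bm cm by force
      have nz: "\<forall>t\<in>{c..a}. f t \<noteq> 0"
      proof
        fix t assume t: "t \<in> {c..a}"
        show "f t \<noteq> 0"
        proof
          assume "f t = 0"
          hence "t \<in> Q" using t a c z0 by (cases "t = a") (auto simp:  Q_def Zs_def)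
          with zmax t c show False by auto
        qed
      qed
      have "f c < 0 \<longleftrightarrow> f a < 0" using nosign[OF cont, of c a] c z0 a nz by auto
      thus "f a < 0 \<longleftrightarrow> even (Suc n)" using fc IHb by auto
    qed
  qed
  define M where "M = Max (insert 0 Zs)"
  have M: "\<forall>w\<in>Zs. w \<le> M" "M < T"
  proof -
    show "\<forall>w\<in>Zs. w \<le> M" using finZ M_def by simp
    have "M \<in> insert 0 Zs" unfolding M_def by (rule Max_in) (use finZ in auto)
    thus "M < T" using T Zs_def by auto
  qed
  have "eventually (\<lambda>t. f t < 0 \<and> t \<in> {M<..<T}) (at_left T)"
    using ev eventually_at_left_real[OF M(2)] by (rule eventually_conj)
  then obtain a where a: "f a < 0" "a \<in> {M<..<T}"
    using eventually_happens trivial_limit_at_left_real by blast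
  have a0: "0 \<le> a" using a M finZ M_def by (meson Max_ge finite_insert greaterThanLessThan_iff insertI1 less_le_not_le order_trans)
  have "{z\<in>Zs. z<a} = Zs" using M a by force
  thus ?thesis using key[rule_format, of a "card Zs"] a a0 Zs_def by auto
qed
lemma main_setup:
  fixes \<beta> \<beta>' :: "real \<Rightarrow> real" and \<delta> \<tau>s :: real
  assumes delta_pos: "\<delta> > 0"
    and beta_pos: "\<forall>s\<ge>0. \<beta> s > 0"
    and beta_deriv: "\<forall>s\<ge>0. (\<beta> has_real_derivative \<beta>' s) (at s within {0..})"
    and beta'_cont: "continuous_on {0..} \<beta>'"
    and beta_strict_dec: "\<forall>s t. 0 \<le> s \<and> s < t \<longrightarrow> \<beta> t < \<beta> s"
    and beta_lim: "(\<beta> \<longlongrightarrow> 0) at_top"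
    and delta_lt: "\<delta> < \<beta> 0"
  shows "continuous_on {0..<taubar \<beta> \<delta>} (Acoef \<beta> \<delta>)"
    "continuous_on {0..<taubar \<beta> \<delta>} (Bcoef \<beta> \<beta>' \<delta>)"
    "\<forall>\<tau>\<in>{0..<taubar \<beta> \<delta>}. Acoef \<beta> \<delta> \<tau> > 0"
proof -
  define T where "T = {0..<taubar \<beta> \<delta>}"
  have bcont: "continuous_on {0..} \<beta>"
    unfolding continuous_on_eq_continuous_within using beta_deriv DERIV_continuous by (metis atLeast_iff)
  have inj: "inj_on \<beta> {0..}"
  proof (rule inj_onI)
    fix x y assume "x \<in> {0::real..}" "y \<in> {0::real..}" "\<beta> x = \<beta> y"
    thus "x = y" using beta_strict_dec by (metis atLeast_iff less_irrefl linorder_neqE_linordered_idom)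
  qed
  obtain M0 where M0: "\<forall>x\<ge>M0. \<beta> x < \<delta>"
    using order_tendstoD(2)[OF beta_lim delta_pos] unfolding eventually_at_top_linorder by blast
  define M where "M = max M0 0"
  have M: "M \<ge> 0" "\<beta> M < \<delta>" using M0 M_def by auto
  have img: "{\<delta>..\<beta> 0} \<subseteq> \<beta> ` {0..M}"
  proof
    fix v assume v: "v \<in> {\<delta>..\<beta> 0}"
    have c: "continuous_on {0..M} \<beta>" using bcont by (rule continuous_on_subset) auto
    from IVT2'[of \<beta> M v 0, OF _ _ M(1) c] v M obtain x where "0 \<le> x" "x \<le> M" "\<beta> x = v" by auto
    thus "v \<in> \<beta> ` {0..M}" by auto
  qed
  have binv: "\<forall>x\<in>{0..M}. betainv \<beta> (\<beta> x) = x"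
    unfolding betainv_def using inj by (auto intro: the_inv_into_f_f)
  have bi_cont: "continuous_on {\<delta>..\<beta> 0} (betainv \<beta>)"
  proof -
    have c: "continuous_on {0..M} \<beta>" using bcont by (rule continuous_on_subset) auto
    have "continuous_on (\<beta> ` {0..M}) (betainv \<beta>)"
      by (rule continuous_on_inv[OF c compact_Icc binv])
    thus ?thesis using img by (rule continuous_on_subset)
  qed
  have bi_val: "betainv \<beta> v \<ge> 0 \<and> \<beta> (betainv \<beta> v) = v" if vv: "v \<in> {\<delta>..\<beta> 0}" for v
  proof -
    obtain x where "x \<in> {0..M}" "v = \<beta> x" using img vv by blast
    thus ?thesis using binv by auto
  qed
  define y where "y \<tau> = \<delta> / (2 * exp (-\<delta>*\<tau>) - 1)" for \<tau>
  have yT: "y \<tau> \<in> {\<delta>..<\<beta> 0} \<and> 2 * exp (-\<delta>*\<tau>) - 1 > 0" if "\<tau> \<in> T" for \<tau>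
  proof -
    have t: "0 \<le> \<tau>" "\<tau> < taubar \<beta> \<delta>" using that T_def by auto
    have b0: "\<beta> 0 > 0" using beta_pos by auto
    have "-\<delta>*\<tau> > -\<delta> * taubar \<beta> \<delta>" using t delta_pos by simp
    also have "-\<delta> * taubar \<beta> \<delta> = ln ((\<delta> + \<beta> 0) / (2 * \<beta> 0))"
      unfolding taubar_def using delta_pos b0 by (simp add: ln_div)
    finally have lt: "ln ((\<delta> + \<beta> 0) / (2 * \<beta> 0)) < -\<delta>*\<tau>" .
    have pq: "(\<delta> + \<beta> 0) / (2 * \<beta> 0) > 0" using delta_pos b0 by simp
    have "exp (-\<delta>*\<tau>) > (\<delta> + \<beta> 0) / (2 * \<beta> 0)"
      using lt pq by (metis exp_less_cancel_iff exp_ln)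
    hence d1: "2 * exp (-\<delta>*\<tau>) - 1 > \<delta> / \<beta> 0" using b0 by (simp add: field_simps)
    have d2: "2 * exp (-\<delta>*\<tau>) - 1 \<le> 1" using t delta_pos by simp
    have dp: "2 * exp (-\<delta>*\<tau>) - 1 > 0" using d1 delta_pos b0 by (meson divide_pos_pos less_trans)
    have "y \<tau> \<ge> \<delta>" unfolding y_def using d2 dp delta_pos by (simp add: field_simps)
    moreover have "y \<tau> < \<beta> 0" unfolding y_def using d1 dp delta_pos b0 by (simp add: field_simps)
    ultimately show ?thesis using dp by auto
  qed
  have ycont: "continuous_on T y" unfolding y_def
    using yT by (intro continuous_intros) force+
  have S_eq: "Sstar \<beta> \<delta> \<tau> = betainv \<beta> (y \<tau>)" for \<tau> unfolding Sstar_def y_def by simp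
  have Scont: "continuous_on T (Sstar \<beta> \<delta>)"
    unfolding S_eq by (rule continuous_on_compose2[OF bi_cont ycont]) (use yT in fastforce)
  have Sval: "Sstar \<beta> \<delta> \<tau> \<ge> 0 \<and> \<beta> (Sstar \<beta> \<delta> \<tau>) = y \<tau>" if "\<tau> \<in> T" for \<tau>
    proof -
    have "y \<tau> \<in> {\<delta>..\<beta> 0}" using yT[OF that] by auto
    thus ?thesis unfolding S_eq using bi_val by blast
  qed
  have Aeq: "Acoef \<beta> \<delta> \<tau> = \<delta> + y \<tau>" if "\<tau> \<in> T" for \<tau>
    unfolding Acoef_def using Sval that by simp
  show "continuous_on {0..<taubar \<beta> \<delta>} (Acoef \<beta> \<delta>)"
    unfolding T_def[symmetric]
  proof (rule continuous_on_cong[THEN iffD1, OF refl])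
    show "\<And>x. x \<in> T \<Longrightarrow> \<delta> + y x = Acoef \<beta> \<delta> x" using Aeq by simp
    show "continuous_on T (\<lambda>x. \<delta> + y x)" using ycont by (intro continuous_intros)
  qed
  show "\<forall>\<tau>\<in>{0..<taubar \<beta> \<delta>}. Acoef \<beta> \<delta> \<tau> > 0"
    unfolding T_def[symmetric] using Aeq yT delta_pos by fastforce
  have bS: "continuous_on T (\<lambda>\<tau>. \<beta> (Sstar \<beta> \<delta> \<tau>))"
    by (rule continuous_on_compose2[OF bcont Scont]) (use Sval in auto)
  have b'S: "continuous_on T (\<lambda>\<tau>. \<beta>' (Sstar \<beta> \<delta> \<tau>))"
    by (rule continuous_on_compose2[OF beta'_cont Scont]) (use Sval in auto)
  show "continuous_on {0..<taubar \<beta> \<delta>} (Bcoef \<beta> \<beta>' \<delta>)"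
    unfolding T_def[symmetric] Bcoef_def[abs_def] Nstar_def
    by (intro continuous_intros bS b'S Scont)
qed

theorem lemma5p3:
  fixes \<beta> \<beta>' :: "real \<Rightarrow> real" and \<delta> \<tau>s :: real
  assumes delta_pos: "\<delta> > 0"
    and beta_pos: "\<forall>s\<ge>0. \<beta> s > 0"
    and beta_deriv: "\<forall>s\<ge>0. (\<beta> has_real_derivative \<beta>' s) (at s within {0..})"
    and beta'_cont: "continuous_on {0..} \<beta>'"
    and beta_strict_dec: "\<forall>s t. 0 \<le> s \<and> s < t \<longrightarrow> \<beta> t < \<beta> s"
    and beta'_neg: "\<forall>s>0. \<beta>' s < 0"
    and beta_lim: "(\<beta> \<longlongrightarrow> 0) at_top"
    and delta_lt: "\<delta> < \<beta> 0"
    and H1: "\<forall>x y. 0 \<le> x \<and> x \<le> y \<and> y \<le> betainv \<beta> \<delta> \<longrightarrow> y * \<beta>' y \<le> x * \<beta>' x"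
    and H2: "betainv \<beta> \<delta> * \<beta>' (betainv \<beta> \<delta>) < - 4 * \<delta>"
    and taus_range: "0 < \<tau>s" "\<tau>s < taubar \<beta> \<delta>"
    and taus_char: "\<forall>\<tau>\<in>{0..<taubar \<beta> \<delta>}.
        (Acoef \<beta> \<delta> \<tau> < \<bar>Bcoef \<beta> \<beta>' \<delta> \<tau>\<bar> \<and> Bcoef \<beta> \<beta>' \<delta> \<tau> < 0) \<longleftrightarrow> \<tau> < \<tau>s"
  shows "\<forall>k::nat.
      Zk \<beta> \<beta>' \<delta> k 0 < 0
    \<and> filterlim (Zk \<beta> \<beta>' \<delta> k) at_bot (at_left \<tau>s)
    \<and> ((finite {\<tau>\<in>{0..<\<tau>s}. Zk \<beta> \<beta>' \<delta> k \<tau> = 0}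
         \<and> (\<forall>z\<in>{\<tau>\<in>{0..<\<tau>s}. Zk \<beta> \<beta>' \<delta> k \<tau> = 0}. changes_sign_at (Zk \<beta> \<beta>' \<delta> k) z))
        \<longrightarrow> even (card {\<tau>\<in>{0..<\<tau>s}. Zk \<beta> \<beta>' \<delta> k \<tau> = 0}))
    \<and> (\<forall>\<tau>\<in>{0..<\<tau>s}. Zk \<beta> \<beta>' \<delta> (Suc k) \<tau> < Zk \<beta> \<beta>' \<delta> k \<tau>)
    \<and> ((\<forall>\<tau>\<in>{0..<\<tau>s}. Zk \<beta> \<beta>' \<delta> k \<tau> \<noteq> 0)
        \<longrightarrow> (\<forall>j>k. \<forall>\<tau>\<in>{0..<\<tau>s}. Zk \<beta> \<beta>' \<delta> j \<tau> \<noteq> 0))"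
proof -
  note stp = main_setup[OF delta_pos beta_pos beta_deriv beta'_cont beta_strict_dec beta_lim delta_lt]
  define A where "A = Acoef \<beta> \<delta>"
  define B where "B = Bcoef \<beta> \<beta>' \<delta>"
  define D where "D t = (B t)\<^sup>2 - (A t)\<^sup>2" for t
  define U where "U = {0..<\<tau>s}"
  define V where "V = {0..<taubar \<beta> \<delta>}"
  have UV: "U \<subseteq> V" using taus_range U_def V_def by auto
  have cA: "continuous_on V A" and cB: "continuous_on V B" and Apos: "\<forall>t\<in>V. A t > 0"
    using stp unfolding A_def B_def V_def by auto
  have AB: "A t > 0 \<and> B t < 0 \<and> A t < - B t" if "t \<in> U" for t
  proof -
    have "t \<in> V" "t < \<tau>s" using that UV U_def by auto
    hence "A t < \<bar>B t\<bar> \<and> B t < 0" "A t > 0" using taus_char Apos unfolding A_def B_def V_def by auto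
    thus ?thesis by auto
  qed
  have q: "-1 < A t / B t \<and> A t / B t < 0" if "t \<in> U" for t
  proof -
    have ab: "A t > 0" "B t < 0" "A t < - B t" using AB[OF that] by auto
    have "-1 < A t / B t" using ab by (simp add: neg_less_divide_eq)
    moreover have "A t / B t < 0" using ab by (simp add: divide_pos_neg)
    ultimately show ?thesis by simp
  qed
  have Dpos: "D t > 0" if "t \<in> U" for t
  proof -
    have ab: "A t > 0" "B t < 0" "A t < - B t" using AB[OF that] by auto
    have "A t * A t < (- B t) * (- B t)" using ab by (intro mult_strict_mono) auto
    hence "A t * A t < B t * B t" by simp
    thus ?thesis unfolding D_def by (simp add: power2_eq_square)
  qed
  have arc: "pi/2 < arccos (A t / B t)" if "t \<in> U" for t
    using arccos_less_arccos[of "A t / B t" 0] q[OF that] arccos_0 by auto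
  have tk: "tauk \<beta> \<beta>' \<delta> k t = (arccos (A t / B t) + 2 * real k * pi) / sqrt (D t)" for k t
    unfolding tauk_def A_def B_def D_def by simp
  have sD: "sqrt (D t) > 0" if "t \<in> U" for t using Dpos[OF that] by simp
  have numge: "arccos (A t / B t) + 2 * real k * pi \<ge> pi/2" if "t \<in> U" for t k
    using arc[OF that] by (smt (verit) mult_nonneg_nonneg of_nat_0_le_iff pi_ge_zero)
  have tkmono: "tauk \<beta> \<beta>' \<delta> k t \<le> tauk \<beta> \<beta>' \<delta> j t" if "t \<in> U" "k \<le> j" for t k j
  proof -
    have "arccos (A t / B t) + 2 * real k * pi \<le> arccos (A t / B t) + 2 * real j * pi"
      using that(2) by (simp add: mult_right_mono)
    thus ?thesis unfolding tk using sD[OF that(1)] by (simp add: divide_right_mono)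
  qed
  have Zsuc: "Zk \<beta> \<beta>' \<delta> (Suc k) t < Zk \<beta> \<beta>' \<delta> k t" if "t \<in> U" for t k
  proof -
    have "arccos (A t / B t) + 2 * real k * pi < arccos (A t / B t) + 2 * real (Suc k) * pi"
      by (simp add: algebra_simps)
    hence "tauk \<beta> \<beta>' \<delta> k t < tauk \<beta> \<beta>' \<delta> (Suc k) t"
      unfolding tk using sD[OF that] by (simp add: divide_strict_right_mono)
    thus ?thesis unfolding Zk_def by simp
  qed
  have tkpos: "tauk \<beta> \<beta>' \<delta> k t \<ge> (pi/2) / sqrt (D t)" if "t \<in> U" for t k
    unfolding tk by (rule divide_right_mono[OF numge[OF that]]) (use sD[OF that] in simp)
  have U0: "0 \<in> U" using taus_range U_def by auto
  have Z0: "Zk \<beta> \<beta>' \<delta> k 0 < 0" for k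
  proof -
    have "(pi/2) / sqrt (D 0) > 0" using sD[OF U0] by simp
    thus ?thesis using tkpos[OF U0, of k] unfolding Zk_def by simp
  qed
  have cZ: "continuous_on U (Zk \<beta> \<beta>' \<delta> k)" for k
  proof -
    have cA': "continuous_on U A" using cA UV by (rule continuous_on_subset)
    have cB': "continuous_on U B" using cB UV by (rule continuous_on_subset)
    have Bnz: "\<forall>t\<in>U. B t \<noteq> 0"
    proof
      fix t assume "t \<in> U" thus "B t \<noteq> 0" using AB[of t] by simp
    qed
    have cq: "continuous_on U (\<lambda>t. A t / B t)" using cA' cB' Bnz by (intro continuous_intros)
    have ca: "continuous_on U (\<lambda>t. arccos (A t / B t))"
      using cq q by (intro continuous_on_arccos) (meson less_imp_le less_trans zero_less_one)+
    have cs: "continuous_on U (\<lambda>t. sqrt (D t))" unfolding D_def using cA' cB' by (intro continuous_intros)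
    have "continuous_on U (\<lambda>t. t - (arccos (A t / B t) + 2 * real k * pi) / sqrt (D t))"
    proof -
      have snz: "\<forall>t\<in>U. sqrt (D t) \<noteq> 0"
      proof
        fix t assume "t \<in> U" thus "sqrt (D t) \<noteq> 0" using sD[of t] by simp
      qed
      have "continuous_on U (\<lambda>t. (arccos (A t / B t) + 2 * real k * pi) / sqrt (D t))"
        by (rule continuous_on_divide[OF continuous_on_add[OF ca continuous_on_const] cs snz])
      thus ?thesis by (rule continuous_on_diff[OF continuous_on_id])
    qed
    thus ?thesis unfolding Zk_def tk .
  qed
  have W: "\<tau>s \<in> {0<..<taubar \<beta> \<delta>}" using taus_range by auto
  have isA: "isCont A \<tau>s" and isB: "isCont B \<tau>s"
  proof -
    have "continuous_on {0<..<taubar \<beta> \<delta>} A" by (rule continuous_on_subset[OF cA]) (auto simp: V_def)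
    thus "isCont A \<tau>s" using W continuous_on_eq_continuous_at[OF open_greaterThanLessThan] by blast
    have "continuous_on {0<..<taubar \<beta> \<delta>} B" by (rule continuous_on_subset[OF cB]) (auto simp: V_def)
    thus "isCont B \<tau>s" using W continuous_on_eq_continuous_at[OF open_greaterThanLessThan] by blast
  qed
  have isD: "isCont D \<tau>s" unfolding D_def using isA isB by (intro continuous_intros)
  have limD: "(D \<longlongrightarrow> D \<tau>s) (at_left \<tau>s)"
    using continuous_at_imp_continuous_at_within[OF isD] continuous_within by blast
  have limB: "(B \<longlongrightarrow> B \<tau>s) (at_left \<tau>s)"
    using continuous_at_imp_continuous_at_within[OF isB] continuous_within by blast
  have evU: "eventually (\<lambda>t. t \<in> U) (at_left \<tau>s)"
    using eventually_at_left_real[OF taus_range(1)] by (rule eventually_mono) (auto simp: U_def)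
  have nb: "at_left \<tau>s \<noteq> bot" by simp
  have Dge: "D \<tau>s \<ge> 0"
    by (rule tendsto_lowerbound[OF limD _ nb]) (rule eventually_mono[OF evU], simp add: Dpos less_imp_le)
  have Ble: "B \<tau>s \<le> 0"
    by (rule tendsto_upperbound[OF limB _ nb]) (rule eventually_mono[OF evU], simp add: AB less_imp_le)
  have Ats: "A \<tau>s > 0" using Apos W V_def by auto
  have "\<not> (A \<tau>s < \<bar>B \<tau>s\<bar> \<and> B \<tau>s < 0)" using taus_char W unfolding A_def B_def by auto
  hence Dle: "D \<tau>s \<le> 0"
  proof (cases "B \<tau>s < 0")
    case True
    assume "\<not> (A \<tau>s < \<bar>B \<tau>s\<bar> \<and> B \<tau>s < 0)"
    hence "-B \<tau>s \<le> A \<tau>s" using True by auto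
    hence "(-B \<tau>s) * (-B \<tau>s) \<le> A \<tau>s * A \<tau>s" using True by (intro mult_mono) auto
    thus ?thesis unfolding D_def by (simp add: power2_eq_square)
  next
    case False
    hence "B \<tau>s = 0" using Ble by auto
    thus ?thesis unfolding D_def by simp
  qed
  have D0: "(D \<longlongrightarrow> 0) (at_left \<tau>s)" using limD Dge Dle by simp
  have sD0: "((\<lambda>t. sqrt (D t)) \<longlongrightarrow> 0) (at_left \<tau>s)" using tendsto_real_sqrt[OF D0] by simp
  have evs: "eventually (\<lambda>t. 0 < sqrt (D t)) (at_left \<tau>s)" by (rule eventually_mono[OF evU], simp add: sD Dpos)
  have inf1: "filterlim (\<lambda>t. inverse (sqrt (D t))) at_top (at_left \<tau>s)"
    by (rule filterlim_inverse_at_top[OF sD0 evs])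
  have inf2: "filterlim (\<lambda>t. (pi/2) * inverse (sqrt (D t))) at_top (at_left \<tau>s)"
    by (rule filterlim_tendsto_pos_mult_at_top[OF tendsto_const _ inf1]) simp
  have inf3: "filterlim (\<lambda>t. - ((pi/2) * inverse (sqrt (D t)))) at_bot (at_left \<tau>s)"
    using inf2 by (subst filterlim_uminus_at_bot) simp
  have inf4: "filterlim (\<lambda>t. \<tau>s + - ((pi/2) * inverse (sqrt (D t)))) at_bot (at_left \<tau>s)"
    by (rule filterlim_tendsto_add_at_bot_iff[OF tendsto_const, THEN iffD2, OF inf3])
  have Zlim: "filterlim (Zk \<beta> \<beta>' \<delta> k) at_bot (at_left \<tau>s)" for k
  proof -
    have le: "eventually (\<lambda>t. Zk \<beta> \<beta>' \<delta> k t \<le> \<tau>s + - ((pi/2) * inverse (sqrt (D t)))) (at_left \<tau>s)"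
      using evU
    proof (rule eventually_mono)
      fix t assume t: "t \<in> U"
      have "t \<le> \<tau>s" using t U_def by auto
      have e1: "(pi/2) * inverse (sqrt (D t)) = (pi/2) / sqrt (D t)" by (simp only: divide_inverse)
      have e2: "Zk \<beta> \<beta>' \<delta> k t = t - tauk \<beta> \<beta>' \<delta> k t" by (simp only: Zk_def)
      show "Zk \<beta> \<beta>' \<delta> k t \<le> \<tau>s + - ((pi/2) * inverse (sqrt (D t)))"
        using tkpos[OF t, of k] e1 e2 \<open>t \<le> \<tau>s\<close> by linarith
    qed
    show ?thesis unfolding filterlim_at_bot
    proof
      fix Z :: real
      have "eventually (\<lambda>t. \<tau>s + - ((pi/2) * inverse (sqrt (D t))) \<le> Z) (at_left \<tau>s)"
        using inf4 unfolding filterlim_at_bot by blast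
      with le have "eventually (\<lambda>t. Zk \<beta> \<beta>' \<delta> k t \<le> \<tau>s + - ((pi/2) * inverse (sqrt (D t)))
          \<and> \<tau>s + - ((pi/2) * inverse (sqrt (D t))) \<le> Z) (at_left \<tau>s)"
        by (rule eventually_conj)
      thus "eventually (\<lambda>t. Zk \<beta> \<beta>' \<delta> k t \<le> Z) (at_left \<tau>s)"
        by (rule eventually_mono) linarith
    qed
  qed
  show ?thesis
  proof (intro allI conjI impI ballI)
    fix k
    show "Zk \<beta> \<beta>' \<delta> k 0 < 0" by (rule Z0)
    show "filterlim (Zk \<beta> \<beta>' \<delta> k) at_bot (at_left \<tau>s)" by (rule Zlim)
    show "\<And>t. t \<in> {0..<\<tau>s} \<Longrightarrow> Zk \<beta> \<beta>' \<delta> (Suc k) t < Zk \<beta> \<beta>' \<delta> k t"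
      using Zsuc U_def by blast
    assume h: "finite {\<tau> \<in> {0..<\<tau>s}. Zk \<beta> \<beta>' \<delta> k \<tau> = 0} \<and>
      (\<forall>z\<in>{\<tau> \<in> {0..<\<tau>s}. Zk \<beta> \<beta>' \<delta> k \<tau> = 0}. changes_sign_at (Zk \<beta> \<beta>' \<delta> k) z)"
    have ev: "eventually (\<lambda>t. Zk \<beta> \<beta>' \<delta> k t < 0) (at_left \<tau>s)"
    proof -
      have "eventually (\<lambda>t. Zk \<beta> \<beta>' \<delta> k t \<le> -1) (at_left \<tau>s)"
        using Zlim[of k] unfolding filterlim_at_bot by blast
      thus ?thesis by (rule eventually_mono) simp
    qed
    show "even (card {\<tau> \<in> {0..<\<tau>s}. Zk \<beta> \<beta>' \<delta> k \<tau> = 0})"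
      using parity[OF cZ[unfolded U_def] Z0 taus_range(1) ev] h by blast
  next
    fix k j t
    assume nz: "\<forall>\<tau>\<in>{0..<\<tau>s}. Zk \<beta> \<beta>' \<delta> k \<tau> \<noteq> 0" and kj: "k < j" and t: "t \<in> {0..<\<tau>s}"
    have "\<forall>s\<in>{0..t}. Zk \<beta> \<beta>' \<delta> k s \<noteq> 0" using nz t by auto
    hence "Zk \<beta> \<beta>' \<delta> k t < 0"
      using nosign[OF cZ[unfolded U_def], of 0 t] t Z0[of k] by auto
    moreover have "Zk \<beta> \<beta>' \<delta> j t \<le> Zk \<beta> \<beta>' \<delta> k t"
      using tkmono[of t k j] t kj U_def unfolding Zk_def by auto
    ultimately show "Zk \<beta> \<beta>' \<delta> j t \<noteq> 0" by auto
  qed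
qed

end
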